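(* Let $K_E$ be a partial $E$-field with $K$ algebraically closed, and let $\sigma:K\to K$ be a field automorphism of order two, $R=K^\sigma$, $i\in K$ with $i^2=-1$, and $\mathbb{S}^1=\{z\in K^\times: z\sigma(z)=1\}$. Then $\sigma\circ E=E\circ\sigma$ (as partial functions) if and only if the following three conditions hold: (1) $\sigma(\mathrm{dom}(E))=\mathrm{dom}(E)$; (2) $E(R\cap\mathrm{dom}(E))\subseteq R_{>0}$; (3) $E(iR\cap\mathrm{dom}(E))\subseteq\mathbb{S}^1$.
   Context: A partial $E$-field $K_E$ consists of a field $K$ of characteristic $0$, a $\mathbb{Q}$-vector subspace $\mathrm{dom}(E)\subseteq K$ and a group homomorphism $E:(\mathrm{dom}(E),+)\to(K^\times,\cdot)$. Since $K$ is algebraically closed of characteristic $0$ and $\sigma$ has order two, $R=K^\sigma$ is a real closed field, ordered with positive cone $R_{>0}$. *)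

theory Defs
  imports "HOL-Computational_Algebra.Polynomial"
begin

definition alg_closed :: "'a::field itself \<Rightarrow> bool" where
  "alg_closed _ \<longleftrightarrow> (\<forall>p::'a poly. degree p > 0 \<longrightarrow> (\<exists>x. poly p x = 0))"

definition partial_E_field :: "'a::field_char_0 set \<Rightarrow> ('a \<Rightarrow> 'a) \<Rightarrow> bool" where
  "partial_E_field D E \<longleftrightarrow>
     0 \<in> D \<and> (\<forall>x\<in>D. \<forall>y\<in>D. x + y \<in> D) \<and> (\<forall>q::rat. \<forall>x\<in>D. of_rat q * x \<in> D) \<and>
     (\<forall>x\<in>D. E x \<noteq> 0) \<and> (\<forall>x\<in>D. \<forall>y\<in>D. E (x + y) = E x * E y)"

definition field_aut_order2 :: "('a::field \<Rightarrow> 'a) \<Rightarrow> bool" where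
  "field_aut_order2 \<sigma> \<longleftrightarrow>
     (\<forall>x y. \<sigma> (x + y) = \<sigma> x + \<sigma> y) \<and> (\<forall>x y. \<sigma> (x * y) = \<sigma> x * \<sigma> y) \<and> \<sigma> 1 = 1 \<and>
     bij \<sigma> \<and> \<sigma> \<circ> \<sigma> = id \<and> \<sigma> \<noteq> id"

definition fixed_field :: "('a \<Rightarrow> 'a) \<Rightarrow> 'a set" where
  "fixed_field \<sigma> = {x. \<sigma> x = x}"

text \<open>Positive cone of the (real closed) field R: the nonzero squares of elements of R.\<close>
definition pos_cone :: "'a::field set \<Rightarrow> 'a set" where
  "pos_cone R = {x \<in> R. x \<noteq> 0 \<and> (\<exists>y\<in>R. x = y * y)}"

definition unit_circle :: "('a::field \<Rightarrow> 'a) \<Rightarrow> 'a set" where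
  "unit_circle \<sigma> = {z. z \<noteq> 0 \<and> z * \<sigma> z = 1}"

text \<open>sigma o E = E o sigma as partial functions: equal domains and equal values.\<close>
definition commutes_partial :: "('a \<Rightarrow> 'a) \<Rightarrow> 'a set \<Rightarrow> ('a \<Rightarrow> 'a) \<Rightarrow> bool" where
  "commutes_partial \<sigma> D E \<longleftrightarrow> {x. \<sigma> x \<in> D} = D \<and> (\<forall>x\<in>D. \<sigma> (E x) = E (\<sigma> x))"

end

theory Submission
  imports Defs
begin

lemma aux_m: "(i::'a::field_char_0) \<noteq> 0 \<Longrightarrow> i * (y / (2 * i)) = y / 2"
  by simp
lemma aux_n: "(a + - x) * (- (y::'a::field_char_0)) = (x - a) * y"
  by (simp add: algebra_simps)
lemma aux_l1: assumes "(i::'a::field_char_0) \<noteq> 0" shows "(a + - x) * inverse (2 * - i) = (x - a) / (2 * i)"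
proof -
  have "inverse (2 * - i) = - inverse (2 * i)" by simp
  then show ?thesis by (simp only: aux_n divide_inverse)
qed
lemma aux_l2: assumes "(i::'a::field_char_0) \<noteq> 0" shows "x = (x + a) / 2 + i * ((x - a) / (2 * i))"
  unfolding aux_m[OF assms] by (simp add: add_divide_distrib[symmetric])
lemma aux_l3: assumes "(i::'a::field_char_0) \<noteq> 0" shows "a = (x + a) / 2 + - (i * ((x - a) / (2 * i)))"
  unfolding aux_m[OF assms] by (simp add: diff_divide_distrib[symmetric])

theorem proposition3p1:
  fixes D :: "'a::field_char_0 set" and E \<sigma> :: "'a \<Rightarrow> 'a" and i :: 'a
  assumes "partial_E_field D E"
    and "alg_closed TYPE('a)"
    and "field_aut_order2 \<sigma>"
    and "i * i = -1"
  shows "commutes_partial \<sigma> D E \<longleftrightarrow>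
           (\<sigma> ` D = D
            \<and> E ` (fixed_field \<sigma> \<inter> D) \<subseteq> pos_cone (fixed_field \<sigma>)
            \<and> E ` ((\<lambda>r. i * r) ` fixed_field \<sigma> \<inter> D) \<subseteq> unit_circle \<sigma>)"
proof -
  note PE = assms(1)[unfolded partial_E_field_def]
  have D0: "0 \<in> D" and Dadd: "\<And>x y. x \<in> D \<Longrightarrow> y \<in> D \<Longrightarrow> x + y \<in> D"
    and Dq: "\<And>q x. x \<in> D \<Longrightarrow> of_rat q * x \<in> D"
    and Enz: "\<And>x. x \<in> D \<Longrightarrow> E x \<noteq> 0"
    and Eadd: "\<And>x y. x \<in> D \<Longrightarrow> y \<in> D \<Longrightarrow> E (x + y) = E x * E y"
    using PE by auto
  have Dneg: "-x \<in> D" if "x \<in> D" for x using Dq[OF that, of "-1"] by simp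
  have Dhalf: "x / 2 \<in> D" if "x \<in> D" for x using Dq[OF that, of "1/2"] by (simp add: of_rat_divide)
  have E0: "E 0 = 1"
  proof -
    have "E 0 = E 0 * E 0" using Eadd[OF D0 D0] by simp
    then show ?thesis using Enz[OF D0]
      by (metis mult_cancel_left2)
  qed
  have Eneg: "E x * E (-x) = 1" if "x \<in> D" for x
    using Eadd[OF that Dneg[OF that]] E0 by simp
  note S = assms(3)[unfolded field_aut_order2_def]
  have sadd: "\<And>x y. \<sigma> (x + y) = \<sigma> x + \<sigma> y" and smul: "\<And>x y. \<sigma> (x * y) = \<sigma> x * \<sigma> y"
    and s1: "\<sigma> 1 = 1" and ss: "\<And>x. \<sigma> (\<sigma> x) = x" and sid: "\<sigma> \<noteq> id"
    using S by (auto simp: fun_eq_iff)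
  have s0: "\<sigma> 0 = 0" using sadd[of 0 0] by simp
  have sneg: "\<sigma> (-x) = - \<sigma> x" for x
    using sadd[of x "-x"] s0 by (metis add.commute neg_eq_iff_add_eq_0)
  have sm1: "\<sigma> (-1) = -1" using sneg[of 1] s1 by simp
  have s2: "\<sigma> 2 = 2" using sadd[of 1 1] s1 by (metis one_add_one)
  have shalf: "\<sigma> (x / 2) = \<sigma> x / 2" for x
  proof -
    have "\<sigma> x = \<sigma> (2 * (x/2))" by simp
    also have "\<dots> = 2 * \<sigma> (x/2)" by (simp only: smul s2)
    finally show ?thesis by simp
  qed
  have sinv: "\<sigma> (inverse x) = inverse (\<sigma> x)" for x
  proof (cases "x = 0")
    case True then show ?thesis using s0 by simp
  next
    case False
    have "\<sigma> x * \<sigma> (inverse x) = 1" using smul[of x "inverse x"] s1 False by simp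
    then show ?thesis by (metis inverse_unique)
  qed
  have si: "\<sigma> i = - i"
  proof (rule ccontr)
    assume ne: "\<sigma> i \<noteq> - i"
    have "\<sigma> i * \<sigma> i = -1" using smul[of i i] assms(4) sm1 by simp
    then have "(\<sigma> i - i) * (\<sigma> i + i) = 0" using assms(4) by (simp add: algebra_simps)
    then have sii: "\<sigma> i = i" using ne by (auto simp: eq_neg_iff_add_eq_0)
    obtain a where a: "\<sigma> a \<noteq> a" using sid by (auto simp: fun_eq_iff)
    define b where "b = a - \<sigma> a"
    have bnz: "b \<noteq> 0" using a by (simp add: b_def)
    have sb: "\<sigma> b = - b" using sadd[of a "- \<sigma> a"] sneg ss by (simp add: b_def)
    have "\<exists>c. poly [:-b, 0, 1:] c = 0"
      using assms(2) unfolding alg_closed_def by (metis degree_pCons_eq_if one_neq_zero pCons_eq_0_iff zero_less_Suc)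
    then obtain c where "poly [:-b, 0, 1:] c = 0" by blast
    then have cc: "c * c = b" by (simp add: algebra_simps)
    have "\<sigma> c * \<sigma> c = - b" using smul[of c c] cc sb by simp
    then have "(\<sigma> c - i * c) * (\<sigma> c + i * c) = 0"
      using assms(4) cc by (simp add: algebra_simps)
    then have "\<sigma> c = i * c \<or> \<sigma> c = - (i * c)" by (auto simp: eq_neg_iff_add_eq_0)
    then have "\<sigma> (\<sigma> c) = i * i * c"
      using smul sii sneg by (auto simp: algebra_simps)
    then have "c = - c" using ss assms(4) by simp
    then have "c = 0" by simp
    then show False using cc bnz by simp
  qed
  have invD: "\<sigma> ` D = D \<longleftrightarrow> {x. \<sigma> x \<in> D} = D"
  proof
    assume h: "\<sigma> ` D = D"
    show "{x. \<sigma> x \<in> D} = D"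
    proof (intro set_eqI iffI)
      fix x assume "x \<in> {x. \<sigma> x \<in> D}"
      then have "\<sigma> (\<sigma> x) \<in> \<sigma> ` D" by simp
      then show "x \<in> D" using h ss by simp
    next
      fix x assume "x \<in> D"
      then have "\<sigma> x \<in> \<sigma> ` D" by simp
      then show "x \<in> {x. \<sigma> x \<in> D}" using h by simp
    qed
  next
    assume h: "{x. \<sigma> x \<in> D} = D"
    show "\<sigma> ` D = D"
    proof (intro set_eqI iffI)
      fix x assume "x \<in> \<sigma> ` D"
      then obtain y where "y \<in> D" "x = \<sigma> y" by auto
      then show "x \<in> D" using h by blast
    next
      fix x assume "x \<in> D"
      then have "\<sigma> (\<sigma> x) \<in> D" using ss by simp
      then have "\<sigma> x \<in> D" using h by blast
      then show "x \<in> \<sigma> ` D" using ss by (metis image_eqI)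
    qed
  qed
  show ?thesis
  proof
    assume c: "commutes_partial \<sigma> D E"
    then have cD: "{x. \<sigma> x \<in> D} = D" and cE: "\<And>x. x \<in> D \<Longrightarrow> \<sigma> (E x) = E (\<sigma> x)"
      by (auto simp: commutes_partial_def)
    have sD: "\<sigma> x \<in> D" if "x \<in> D" for x using cD that by blast
    have 2: "E ` (fixed_field \<sigma> \<inter> D) \<subseteq> pos_cone (fixed_field \<sigma>)"
    proof
      fix z assume "z \<in> E ` (fixed_field \<sigma> \<inter> D)"
      then obtain x where x: "\<sigma> x = x" "x \<in> D" "z = E x" by (auto simp: fixed_field_def)
      define y where "y = E (x/2)"
      have "\<sigma> y = y" using cE[OF Dhalf[OF x(2)]] shalf x(1) by (simp add: y_def)
      moreover have "z = y * y" using Eadd[OF Dhalf[OF x(2)] Dhalf[OF x(2)]] x by (simp add: y_def)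
      moreover have "z \<noteq> 0" using Enz x by simp
      moreover have "\<sigma> z = z" using cE[OF x(2)] x by simp
      ultimately show "z \<in> pos_cone (fixed_field \<sigma>)"
        unfolding pos_cone_def fixed_field_def by auto
    qed
    have 3: "E ` ((\<lambda>r. i * r) ` fixed_field \<sigma> \<inter> D) \<subseteq> unit_circle \<sigma>"
    proof
      fix z assume "z \<in> E ` ((\<lambda>r. i * r) ` fixed_field \<sigma> \<inter> D)"
      then obtain r where r: "\<sigma> r = r" "i * r \<in> D" "z = E (i * r)" by (auto simp: fixed_field_def)
      have "\<sigma> (i * r) = - (i * r)" using smul si r(1) by simp
      then have "z * \<sigma> z = 1" using cE[OF r(2)] Eneg[OF r(2)] r(3) by simp
      then show "z \<in> unit_circle \<sigma>" using Enz r by (auto simp: unit_circle_def)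
    qed
    show "\<sigma> ` D = D \<and> E ` (fixed_field \<sigma> \<inter> D) \<subseteq> pos_cone (fixed_field \<sigma>)
            \<and> E ` ((\<lambda>r. i * r) ` fixed_field \<sigma> \<inter> D) \<subseteq> unit_circle \<sigma>"
      using invD cD 2 3 by simp
  next
    assume h: "\<sigma> ` D = D \<and> E ` (fixed_field \<sigma> \<inter> D) \<subseteq> pos_cone (fixed_field \<sigma>)
            \<and> E ` ((\<lambda>r. i * r) ` fixed_field \<sigma> \<inter> D) \<subseteq> unit_circle \<sigma>"
    then have cD: "{x. \<sigma> x \<in> D} = D" using invD by simp
    have sD: "\<sigma> x \<in> D" if "x \<in> D" for x using cD that by blast
    have h2: "\<sigma> (E x) = E x" if "\<sigma> x = x" "x \<in> D" for x
    proof -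
      have "E x \<in> pos_cone (fixed_field \<sigma>)" using h that by (auto simp: fixed_field_def)
      then show ?thesis by (simp add: pos_cone_def fixed_field_def)
    qed
    have h3: "E (i * r) * \<sigma> (E (i * r)) = 1" if "\<sigma> r = r" "i * r \<in> D" for r
    proof -
      have "i * r \<in> (\<lambda>r. i * r) ` fixed_field \<sigma> \<inter> D" using that by (auto simp: fixed_field_def)
      then have "E (i * r) \<in> unit_circle \<sigma>" using h by blast
      then show ?thesis by (simp add: unit_circle_def)
    qed
    have inz: "i \<noteq> 0" using assms(4) by auto
    have "\<forall>x\<in>D. \<sigma> (E x) = E (\<sigma> x)"
    proof
      fix x assume x: "x \<in> D"
      define r where "r = (x + \<sigma> x) / 2"
      define s where "s = (x - \<sigma> x) / (2 * i)"
      have rD: "r \<in> D" unfolding r_def by (rule Dhalf[OF Dadd[OF x sD[OF x]]])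
      have "(x + - \<sigma> x) / 2 \<in> D" by (rule Dhalf[OF Dadd[OF x Dneg[OF sD[OF x]]]])
      moreover have "i * s = (x + - \<sigma> x) / 2" using inz by (simp add: s_def)
      ultimately have isD: "i * s \<in> D" by metis
      have sr: "\<sigma> r = r"
      proof -
        have e1: "\<sigma> r = \<sigma> (x + \<sigma> x) / 2" unfolding r_def by (rule shalf)
        have e2: "\<sigma> (x + \<sigma> x) = \<sigma> x + x" using sadd[of x "\<sigma> x"] ss[of x] by simp
        show ?thesis using e1 e2 unfolding r_def by (simp add: add.commute)
      qed
      have ssv: "\<sigma> s = s"
      proof -
        have sdef: "s = (x + - \<sigma> x) * inverse (2 * i)" unfolding s_def by (simp only: divide_inverse diff_conv_add_uminus)
        have e1: "\<sigma> s = \<sigma> (x + - \<sigma> x) * \<sigma> (inverse (2 * i))" unfolding sdef by (rule smul)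
        have e2: "\<sigma> (x + - \<sigma> x) = \<sigma> x + - x" using sadd[of x "- \<sigma> x"] sneg[of "\<sigma> x"] ss[of x] by simp
        have e3: "\<sigma> (inverse (2 * i)) = inverse (2 * - i)" using sinv[of "2*i"] smul[of 2 i] s2 si by simp
        have e4: "(\<sigma> x + - x) * inverse (2 * - i) = s" unfolding s_def by (rule aux_l1[OF inz])
        show ?thesis using e1 e2 e3 e4 by simp
      qed
      have xeq: "x = r + i * s" unfolding r_def s_def by (rule aux_l2[OF inz])
      have sxeq: "\<sigma> x = r + - (i * s)" unfolding r_def s_def by (rule aux_l3[OF inz])
      have "\<sigma> (E x) = \<sigma> (E r) * \<sigma> (E (i * s))" using Eadd[OF rD isD] xeq smul by simp
      also have "\<dots> = E r * E (- (i * s))"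
      proof -
        have "E (i * s) * \<sigma> (E (i * s)) = 1" using h3 ssv isD by simp
        moreover have "E (i * s) * E (- (i * s)) = 1" using Eneg isD by simp
        ultimately have "\<sigma> (E (i * s)) = E (- (i * s))" using Enz[OF isD]
          by (metis mult_left_cancel)
        then show ?thesis using h2[OF sr rD] by simp
      qed
      also have "\<dots> = E (\<sigma> x)" using Eadd[OF rD Dneg[OF isD]] sxeq by simp
      finally show "\<sigma> (E x) = E (\<sigma> x)" .
    qed
    then show "commutes_partial \<sigma> D E" using cD by (simp add: commutes_partial_def)
  qed
qed

end
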